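(* Let $n\ge 3$ and let $\mathcal{P}_E(D_{2n})$ be the enhanced power graph of the dihedral group $D_{2n}$. Then the Sombor spectrum of $\mathcal{P}_E(D_{2n})$ consists of $-(n-1)\sqrt2$ with multiplicity $n-2$, $0$ with multiplicity $n-1$, and the three roots (with multiplicity) of \[x^2\big(x-(n-1)(n-2)\sqrt2\big)-(n-1)(5n^2-6n+2)x-2n(2n^2-2n+1)\big(x-(n-1)(n-2)\sqrt2\big).\]
   Context: For a finite simple graph $\Gamma$ with vertices $u_1,\dots,u_N$, the Sombor matrix $S(\Gamma)$ has $(i,j)$ entry $\sqrt{\deg(u_i)^2+\deg(u_j)^2}$ if $u_i,u_j$ are adjacent and $0$ otherwise; the Sombor spectrum is the multiset of its eigenvalues. $D_{2n}=\langle a,b: a^n=b^2=e,\ ba=a^{-1}b\rangle$. The enhanced power graph $\mathcal{P}_E(G)$ of a group $G$ has vertex set $G$, two distinct vertices being adjacent iff both belong to a common cyclic subgroup of $G$. *)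

theory Defs
  imports "Jordan_Normal_Form.Char_Poly" "HOL-Algebra.Generated_Groups"
begin

text \<open>Dihedral group of order 2n: element (i, s) stands for a^i b^s (s = True means b present),
  with a^n = b^2 = e and b a = a^{-1} b.\<close>
definition dihedral_group :: "nat \<Rightarrow> (nat \<times> bool) monoid" where
  "dihedral_group n = \<lparr> carrier = {0..<n} \<times> (UNIV :: bool set),
     mult = (\<lambda>(i, s) (j, t). ((if s then i + (n - j) else i + j) mod n, s \<noteq> t)),
     one = (0, False) \<rparr>"

definition enhanced_power_adj :: "('a, 'b) monoid_scheme \<Rightarrow> 'a \<Rightarrow> 'a \<Rightarrow> bool" where
  "enhanced_power_adj G x y \<longleftrightarrow> x \<in> carrier G \<and> y \<in> carrier G \<and> x \<noteq> y \<and>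
     (\<exists>z \<in> carrier G. x \<in> generate G {z} \<and> y \<in> generate G {z})"

definition graph_deg :: "'a set \<Rightarrow> ('a \<Rightarrow> 'a \<Rightarrow> bool) \<Rightarrow> 'a \<Rightarrow> nat" where
  "graph_deg V E u = card {v \<in> V. E u v}"

definition sombor_matrix :: "'a list \<Rightarrow> ('a \<Rightarrow> 'a \<Rightarrow> bool) \<Rightarrow> real mat" where
  "sombor_matrix vs E = mat (length vs) (length vs) (\<lambda>(i, j).
     if E (vs ! i) (vs ! j)
     then sqrt (real (graph_deg (set vs) E (vs ! i)) ^ 2 + real (graph_deg (set vs) E (vs ! j)) ^ 2)
     else 0)"

end

theory Submission
  imports Defs
begin


lemma char_poly_reorder:
  fixes f :: "'a \<Rightarrow> 'a \<Rightarrow> 'b :: comm_ring_1"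
  assumes dv: "distinct vs" and dw: "distinct ws" and s: "set vs = set ws"
  shows "char_poly (mat (length vs) (length vs) (\<lambda>(i,j). f (vs!i) (vs!j))) =
         char_poly (mat (length ws) (length ws) (\<lambda>(i,j). f (ws!i) (ws!j)))"
proof -
  have len: "length vs = length ws" using dv dw s by (metis distinct_card)
  define N where "N = length ws"
  define p where "p = (\<lambda>i. if i < N then (SOME k. k < N \<and> ws ! k = vs ! i) else i)"
  have pex: "p i < N \<and> ws ! (p i) = vs ! i" if "i < N" for i
  proof -
    have "vs ! i \<in> set ws" using that s len by (metis nth_mem N_def)
    then have "\<exists>k. k < N \<and> ws ! k = vs ! i" by (simp add: in_set_conv_nth N_def)
    then have "(SOME k. k < N \<and> ws ! k = vs ! i) < N \<and> ws ! (SOME k. k < N \<and> ws ! k = vs ! i) = vs ! i"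
      by (rule someI_ex)
    then show ?thesis using that unfolding p_def by simp
  qed
  have pv: "ws ! (p i) = vs ! i" if "i < N" for i using pex[OF that] by simp
  have plt: "p i < N" if "i < N" for i using pex[OF that] by simp
  have pinj: "inj_on p {0..<N}"
  proof (rule inj_onI)
    fix i j assume "i \<in> {0..<N}" "j \<in> {0..<N}" "p i = p j"
    then have "vs ! i = vs ! j" using pv by (metis atLeastLessThan_iff)
    then show "i = j" using dv len \<open>i \<in> {0..<N}\<close> \<open>j \<in> {0..<N}\<close> by (simp add: N_def nth_eq_iff_index_eq)
  qed
  have pperm: "p permutes {0..<N}"
  proof -
    have "p ` {0..<N} = {0..<N}"
      using pinj plt by (intro endo_inj_surj) auto
    then have "bij_betw p {0..<N} {0..<N}" using pinj by (simp add: bij_betw_def)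
    moreover have "p i = i" if "i \<notin> {0..<N}" for i using that by (simp add: p_def)
    ultimately show ?thesis by (intro bij_imp_permutes) auto
  qed
  define A where "A = char_poly_matrix (mat N N (\<lambda>(i,j). f (ws!i) (ws!j)))"
  have A: "A \<in> carrier_mat N N" by (simp add: A_def)
  have eq1: "char_poly_matrix (mat N N (\<lambda>(i,j). f (vs!i) (vs!j))) = mat N N (\<lambda>(i,j). A $$ (p i, p j))"
    by (rule eq_matI) (auto simp: A_def char_poly_matrix_def pv plt inj_on_eq_iff[OF pinj])
  define A1 where "A1 = mat N N (\<lambda>(i,j). A $$ (i, p j))"
  have A1: "A1 \<in> carrier_mat N N" by (simp add: A1_def)
  have "det (mat N N (\<lambda>(i,j). A $$ (p i, p j))) = det (mat N N (\<lambda>(i,j). A1 $$ (p i, j)))"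
    by (rule arg_cong[where f = det], rule eq_matI) (auto simp: A1_def plt)
  also have "\<dots> = signof p * det A1" by (rule det_permute_rows[OF A1 pperm])
  also have "det A1 = det (transpose_mat A1)" using det_transpose[OF A1] by simp
  also have "transpose_mat A1 = mat N N (\<lambda>(i,j). (transpose_mat A) $$ (p i, j))"
    by (rule eq_matI) (use A in \<open>auto simp: A1_def plt carrier_matD\<close>)
  also have "det \<dots> = signof p * det (transpose_mat A)"
    by (rule det_permute_rows[OF _ pperm]) (simp add: A)
  also have "det (transpose_mat A) = det A" using det_transpose[OF A] .
  finally have "det (mat N N (\<lambda>(i,j). A $$ (p i, p j))) = (signof p * signof p) * det A" by (simp add: ac_simps)
  also have "signof p * signof p = (1 :: 'b poly)" by (simp flip: of_int_mult)
  finally have X: "det (mat N N (\<lambda>(i,j). A $$ (p i, p j))) = det A" by simp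
  have "char_poly (mat (length vs) (length vs) (\<lambda>(i,j). f (vs!i) (vs!j))) = det (char_poly_matrix (mat N N (\<lambda>(i,j). f (vs!i) (vs!j))))"
    by (simp add: char_poly_def len N_def)
  also have "\<dots> = det (mat N N (\<lambda>(i,j). A $$ (p i, p j)))" by (simp only: eq1)
  also have "\<dots> = det A" by (rule X)
  also have "\<dots> = char_poly (mat (length ws) (length ws) (\<lambda>(i,j). f (ws!i) (ws!j)))" by (simp add: A_def char_poly_def N_def)
  finally show ?thesis .
qed


definition isR :: "nat \<Rightarrow> nat \<Rightarrow> bool" where "isR n i \<longleftrightarrow> i = 1 \<or> (3 \<le> i \<and> i \<le> n)"
definition isF :: "nat \<Rightarrow> nat \<Rightarrow> bool" where "isF n i \<longleftrightarrow> i = 2 \<or> n < i"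

lemma sum_split5: fixes n :: nat assumes "n \<ge> 3"
  shows "(\<Sum>k<2*n. f k) = f 0 + f 1 + f 2 + (\<Sum>k\<in>{3..n}. f k) + (\<Sum>k\<in>{n<..<2*n}. f k)"
proof -
  have "{..<2*n} = {..<3} \<union> ({3..n} \<union> {n<..<2*n})" using assms by auto
  moreover have d1: "{3..n} \<inter> {n<..<2*n} = {}" and d2: "{..<3} \<inter> ({3..n} \<union> {n<..<2*n}) = {}" by auto
  ultimately have "(\<Sum>k<2*n. f k) = sum f {..<3} + (sum f {3..n} + sum f {n<..<2*n})"
    by (simp add: sum.union_disjoint)
  moreover have "sum f {..<3} = f 0 + f 1 + f 2" by (simp add: numeral_3_eq_3 numeral_2_eq_2 lessThan_Suc add.commute add.left_commute)
  ultimately show ?thesis by (simp add: add.assoc)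
qed

lemma sum_ob: fixes a b x y :: real assumes "finite A"
  shows "(\<Sum>k\<in>A. (a - of_bool (k = i) * x) * (b - of_bool (k = j) * y)) =
    real (card A) * a * b - of_bool (i \<in> A) * x * b - of_bool (j \<in> A) * a * y + of_bool (i \<in> A \<and> i = j) * x * y"
proof -
  have e: "(a - of_bool (k = i) * x) * (b - of_bool (k = j) * y) =
     a * b - (if k = i then x * b else 0) - (if k = j then a * y else 0) + (if k = i then of_bool (i = j) * (x * y) else 0)" for k
    by (auto simp: algebra_simps)
  show ?thesis unfolding e using assms
    by (simp add: sum.distrib sum_subtractf sum.delta)
qed

definition pf :: "nat \<Rightarrow> nat \<Rightarrow> nat \<Rightarrow> real" where
  "pf n i j = (if j = 0 then of_bool (i=0) else if j = 1 then of_bool (isR n i)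
     else if j = 2 then of_bool (isF n i) else if j \<le> n then of_bool (i=1) - of_bool (i=j) else of_bool (i=2) - of_bool (i=j))"
definition qf :: "nat \<Rightarrow> nat \<Rightarrow> nat \<Rightarrow> real" where
  "qf n i j = (if i = 0 then of_bool (j=0) else if i = 1 then of_bool (isR n j) / real (n-1)
     else if i = 2 then of_bool (isF n j) / real n else if i \<le> n then of_bool (isR n j) / real (n-1) - of_bool (j=i)
     else of_bool (isF n j) / real n - of_bool (j=i))"

lemma pf_R: "n \<ge> 3 \<Longrightarrow> 3 \<le> k \<Longrightarrow> k \<le> n \<Longrightarrow> pf n k j = of_bool (j = 1) - of_bool (k = j) * 1"
  by (auto simp: pf_def isR_def isF_def)
lemma pf_F: "n \<ge> 3 \<Longrightarrow> n < k \<Longrightarrow> pf n k j = of_bool (j = 2) - of_bool (k = j) * 1"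
  by (auto simp: pf_def isR_def isF_def)
lemma qf_R: "3 \<le> k \<Longrightarrow> k \<le> n \<Longrightarrow> qf n i k = of_bool (isR n i) / real (n-1) - of_bool (k = i) * 1"
  by (auto simp: qf_def isR_def isF_def)
lemma qf_F: "n < k \<Longrightarrow> n \<ge> 3 \<Longrightarrow> qf n i k = of_bool (isF n i) / real n - of_bool (k = i) * 1"
  by (auto simp: qf_def isR_def isF_def)

lemma mat_mult_entry: "i < N \<Longrightarrow> j < N \<Longrightarrow> (mat N N (\<lambda>(i,j). f i j) * mat N N (\<lambda>(i,j). g i j)) $$ (i,j) = (\<Sum>k<N. f i k * g k j)"
  by (simp add: scalar_prod_def atLeast0LessThan)

lemma QP: assumes n: "n \<ge> 3" shows "mat (2*n) (2*n) (\<lambda>(i,j). qf n i j) * mat (2*n) (2*n) (\<lambda>(i,j). pf n i j) = 1\<^sub>m (2*n)"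
proof (rule eq_matI)
  fix i j assume "i < dim_row (1\<^sub>m (2*n))" "j < dim_col (1\<^sub>m (2*n))"
  then have i: "i < 2*n" and j: "j < 2*n" by auto
  have nr: "real (n-1) \<noteq> 0" "real n \<noteq> 0" using n by auto
  have cR: "card {3..n} = n - 2" and cF: "card {n<..<2*n} = n - 1" by auto
  have "(\<Sum>k\<in>{3..n}. qf n i k * pf n k j) = (\<Sum>k\<in>{3..n}. (of_bool (isR n i) / real (n-1) - of_bool (k = i) * 1) * (of_bool (j = 1) - of_bool (k = j) * 1))"
    by (rule sum.cong) (use n in \<open>auto simp: pf_R qf_R\<close>)
  also have "\<dots> = real (n-2) * (of_bool (isR n i) / real (n-1)) * of_bool (j = 1) - of_bool (i \<in> {3..n}) * of_bool (j = 1)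
     - of_bool (j \<in> {3..n}) * (of_bool (isR n i) / real (n-1)) + of_bool (i \<in> {3..n} \<and> i = j)"
    by (subst sum_ob) (auto simp: cR)
  finally have sR: "(\<Sum>k\<in>{3..n}. qf n i k * pf n k j) = \<dots>" .
  have "(\<Sum>k\<in>{n<..<2*n}. qf n i k * pf n k j) = (\<Sum>k\<in>{n<..<2*n}. (of_bool (isF n i) / real n - of_bool (k = i) * 1) * (of_bool (j = 2) - of_bool (k = j) * 1))"
    by (rule sum.cong) (use n in \<open>auto simp: pf_F qf_F\<close>)
  also have "\<dots> = real (n-1) * (of_bool (isF n i) / real n) * of_bool (j = 2) - of_bool (i \<in> {n<..<2*n}) * of_bool (j = 2)
     - of_bool (j \<in> {n<..<2*n}) * (of_bool (isF n i) / real n) + of_bool (i \<in> {n<..<2*n} \<and> i = j)"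
    by (subst sum_ob) (auto simp: cF)
  finally have sF: "(\<Sum>k\<in>{n<..<2*n}. qf n i k * pf n k j) = \<dots>" .
  have r1: "real (n-1) = real n - 1" and r2: "real (n-2) = real n - 2" using n by auto
  have nr1: "real n - 1 \<noteq> 0" using n by auto
  have "(\<Sum>k<2*n. qf n i k * pf n k j) = of_bool (i = j)"
    unfolding sum_split5[OF n] sR sF r1 r2
    using i j n nr(2) nr1
    by (auto simp: qf_def pf_def isR_def isF_def r1) (simp_all add: field_simps nr1 nr(2))
  then show "(mat (2*n) (2*n) (\<lambda>(i,j). qf n i j) * mat (2*n) (2*n) (\<lambda>(i,j). pf n i j)) $$ (i,j) = 1\<^sub>m (2*n) $$ (i,j)"
    using i j by (subst mat_mult_entry[OF i j]) simp
qed auto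
definition cf :: "nat \<Rightarrow> real \<Rightarrow> real \<Rightarrow> real \<Rightarrow> nat \<Rightarrow> nat \<Rightarrow> real" where
  "cf n a b w i j = (if i = j then 0 else if i = 0 then (if isR n j then a else b) else if j = 0 then (if isR n i then a else b)
     else if isR n i \<and> isR n j then w else 0)"
definition bf :: "nat \<Rightarrow> real \<Rightarrow> real \<Rightarrow> real \<Rightarrow> nat \<Rightarrow> nat \<Rightarrow> real" where
  "bf n a b w i j = (if i = 0 then (if j = 1 then real (n-1) * a else if j = 2 then real n * b else 0)
     else if i = 1 then (if j = 0 then a else if j = 1 then real (n-2) * w else 0)
     else if i = 2 then (if j = 0 then b else 0) else if i = j \<and> i \<le> n then - w else 0)"

lemma cf_R: "3 \<le> k \<Longrightarrow> k \<le> n \<Longrightarrow> cf n a b w i k = (of_bool (i = 0) * a + of_bool (isR n i) * w) - of_bool (k = i) * w"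
  by (auto simp: cf_def isR_def)
lemma cf_F: "n < k \<Longrightarrow> n \<ge> 3 \<Longrightarrow> cf n a b w i k = of_bool (i = 0) * b - of_bool (k = i) * 0"
  by (auto simp: cf_def isR_def)
lemma pf_R2: "3 \<le> k \<Longrightarrow> k \<le> n \<Longrightarrow> pf n i k = of_bool (i = 1) - of_bool (k = i) * 1"
  by (auto simp: pf_def)
lemma pf_F2: "n < k \<Longrightarrow> n \<ge> 3 \<Longrightarrow> pf n i k = of_bool (i = 2) - of_bool (k = i) * 1"
  by (auto simp: pf_def)
lemma bf_R: "3 \<le> k \<Longrightarrow> k \<le> n \<Longrightarrow> bf n a b w k j = 0 - of_bool (k = j) * w"
  by (auto simp: bf_def)
lemma bf_F: "n < k \<Longrightarrow> n \<ge> 3 \<Longrightarrow> bf n a b w k j = 0 - of_bool (k = j) * 0"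
  by (auto simp: bf_def)

lemma CP: assumes n: "n \<ge> 3" shows "mat (2*n) (2*n) (\<lambda>(i,j). cf n a b w i j) * mat (2*n) (2*n) (\<lambda>(i,j). pf n i j)
   = mat (2*n) (2*n) (\<lambda>(i,j). pf n i j) * mat (2*n) (2*n) (\<lambda>(i,j). bf n a b w i j)"
proof (rule eq_matI)
  fix i j assume "i < dim_row (mat (2*n) (2*n) (\<lambda>(i,j). pf n i j) * mat (2*n) (2*n) (\<lambda>(i,j). bf n a b w i j))"
     "j < dim_col (mat (2*n) (2*n) (\<lambda>(i,j). pf n i j) * mat (2*n) (2*n) (\<lambda>(i,j). bf n a b w i j))"
  then have i: "i < 2*n" and j: "j < 2*n" by auto
  have cR: "card {3..n} = n - 2" and cF: "card {n<..<2*n} = n - 1" by auto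
  have "(\<Sum>k\<in>{3..n}. cf n a b w i k * pf n k j) = (\<Sum>k\<in>{3..n}. ((of_bool (i = 0) * a + of_bool (isR n i) * w) - of_bool (k = i) * w) * (of_bool (j = 1) - of_bool (k = j) * 1))"
    by (rule sum.cong) (use n in \<open>auto simp: pf_R cf_R\<close>)
  also have "\<dots> = real (n-2) * (of_bool (i = 0) * a + of_bool (isR n i) * w) * of_bool (j = 1) - of_bool (i \<in> {3..n}) * w * of_bool (j = 1)
     - of_bool (j \<in> {3..n}) * (of_bool (i = 0) * a + of_bool (isR n i) * w) * 1 + of_bool (i \<in> {3..n} \<and> i = j) * w * 1"
    by (subst sum_ob) (auto simp: cR)
  finally have sR: "(\<Sum>k\<in>{3..n}. cf n a b w i k * pf n k j) = \<dots>" .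
  have "(\<Sum>k\<in>{n<..<2*n}. cf n a b w i k * pf n k j) = (\<Sum>k\<in>{n<..<2*n}. (of_bool (i = 0) * b - of_bool (k = i) * 0) * (of_bool (j = 2) - of_bool (k = j) * 1))"
    by (rule sum.cong) (use n in \<open>auto simp: pf_F cf_F\<close>)
  also have "\<dots> = real (n-1) * (of_bool (i = 0) * b) * of_bool (j = 2) - of_bool (i \<in> {n<..<2*n}) * 0 * of_bool (j = 2)
     - of_bool (j \<in> {n<..<2*n}) * (of_bool (i = 0) * b) * 1 + of_bool (i \<in> {n<..<2*n} \<and> i = j) * 0 * 1"
    by (subst sum_ob) (auto simp: cF)
  finally have sF: "(\<Sum>k\<in>{n<..<2*n}. cf n a b w i k * pf n k j) = \<dots>" .
  have "(\<Sum>k\<in>{3..n}. pf n i k * bf n a b w k j) = (\<Sum>k\<in>{3..n}. (of_bool (i = 1) - of_bool (k = i) * 1) * (0 - of_bool (k = j) * w))"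
    by (rule sum.cong) (use n in \<open>auto simp: pf_R2 bf_R\<close>)
  also have "\<dots> = real (n-2) * of_bool (i = 1) * 0 - of_bool (i \<in> {3..n}) * 1 * 0
     - of_bool (j \<in> {3..n}) * of_bool (i = 1) * w + of_bool (i \<in> {3..n} \<and> i = j) * 1 * w"
    by (subst sum_ob) (auto simp: cR)
  finally have tR: "(\<Sum>k\<in>{3..n}. pf n i k * bf n a b w k j) = \<dots>" .
  have "(\<Sum>k\<in>{n<..<2*n}. pf n i k * bf n a b w k j) = (\<Sum>k\<in>{n<..<2*n}. (of_bool (i = 2) - of_bool (k = i) * 1) * (0 - of_bool (k = j) * 0))"
    by (rule sum.cong) (use n in \<open>auto simp: pf_F2 bf_F\<close>)
  also have "\<dots> = 0" by simp
  finally have tF: "(\<Sum>k\<in>{n<..<2*n}. pf n i k * bf n a b w k j) = 0" .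
  have r1: "real (n-1) = real n - 1" and r2: "real (n-2) = real n - 2" using n by auto
  have "(\<Sum>k<2*n. cf n a b w i k * pf n k j) = (\<Sum>k<2*n. pf n i k * bf n a b w k j)"
    unfolding sum_split5[OF n] sR sF tR tF r1 r2
    using i j n
    by (auto simp: cf_def pf_def bf_def isR_def isF_def r1 r2 algebra_simps)
  then show "(mat (2*n) (2*n) (\<lambda>(i,j). cf n a b w i j) * mat (2*n) (2*n) (\<lambda>(i,j). pf n i j)) $$ (i,j) =
     (mat (2*n) (2*n) (\<lambda>(i,j). pf n i j) * mat (2*n) (2*n) (\<lambda>(i,j). bf n a b w i j)) $$ (i,j)"
    using i j by (simp only: mat_mult_entry[OF i j])
qed auto
lemma det2: fixes A :: "'a :: comm_ring_1 mat" assumes A: "A \<in> carrier_mat 2 2"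
  shows "det A = A $$ (0,0) * A $$ (1,1) - A $$ (0,1) * A $$ (1,0)"
proof -
  have "det A = (\<Sum>i<2. A $$ (i,0) * cofactor A i 0)" by (rule laplace_expansion_column[OF A]) simp
  also have "\<dots> = A $$ (0,0) * A $$ (1,1) - A $$ (0,1) * A $$ (1,0)"
    using A by (simp add: numeral_2_eq_2 cofactor_def det_single mat_delete_def mat_delete_carrier algebra_simps)
  finally show ?thesis .
qed

lemma det3: fixes A :: "'a :: comm_ring_1 mat" assumes A: "A \<in> carrier_mat 3 3"
  shows "det A = A $$ (0,0) * (A $$ (1,1) * A $$ (2,2) - A $$ (1,2) * A $$ (2,1))
     - A $$ (1,0) * (A $$ (0,1) * A $$ (2,2) - A $$ (0,2) * A $$ (2,1))
     + A $$ (2,0) * (A $$ (0,1) * A $$ (1,2) - A $$ (0,2) * A $$ (1,1))"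
proof -
  have "det A = (\<Sum>i<3. A $$ (i,0) * cofactor A i 0)" by (rule laplace_expansion_column[OF A]) simp
  also have "\<dots> = A $$ (0,0) * (A $$ (1,1) * A $$ (2,2) - A $$ (1,2) * A $$ (2,1))
     - A $$ (1,0) * (A $$ (0,1) * A $$ (2,2) - A $$ (0,2) * A $$ (2,1))
     + A $$ (2,0) * (A $$ (0,1) * A $$ (1,2) - A $$ (0,2) * A $$ (1,1))"
    using A by (simp add: numeral_3_eq_3 numeral_2_eq_2 cofactor_def det2 mat_delete_def mat_delete_carrier algebra_simps)
  finally show ?thesis .
qed

lemma charB: assumes n: "n \<ge> 3"
  shows "char_poly (mat (2*n) (2*n) (\<lambda>(i,j). bf n a b w i j)) =
    [:w, 1:] ^ (n-2) * [:0, 1:] ^ (n-1) *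
    ([:0,1:]^2 * ([:0,1:] - [:real (n-2) * w:]) - [:real (n-1) * a^2:] * [:0,1:] - [:real n * b^2:] * ([:0,1:] - [:real (n-2) * w:]))"
proof -
  define B3 where "B3 = mat 3 3 (\<lambda>(i,j). bf n a b w i j)"
  define D where "D = mat (2*n-3) (2*n-3) (\<lambda>(i,j). bf n a b w (i+3) (j+3))"
  have B3: "B3 \<in> carrier_mat 3 3" and D: "D \<in> carrier_mat (2*n-3) (2*n-3)" by (auto simp: B3_def D_def)
  have N: "2*n = 3 + (2*n-3)" using n by simp
  have "char_poly_matrix (mat (2*n) (2*n) (\<lambda>(i,j). bf n a b w i j)) =
     four_block_mat (char_poly_matrix B3) (0\<^sub>m 3 (2*n-3)) (0\<^sub>m (2*n-3) 3) (char_poly_matrix D)"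
    by (rule eq_matI) (use n in \<open>auto simp: char_poly_matrix_def B3_def D_def bf_def\<close>)
  then have "char_poly (mat (2*n) (2*n) (\<lambda>(i,j). bf n a b w i j)) = char_poly B3 * char_poly D"
    unfolding char_poly_def
    by (simp add: det_four_block_mat_lower_left_zero[OF char_poly_matrix_closed[OF B3] _ refl char_poly_matrix_closed[OF D]])
  moreover have "char_poly D = [:w, 1:] ^ (n-2) * [:0, 1:] ^ (n-1)"
  proof -
    have ut: "upper_triangular D" by (auto simp: upper_triangular_def D_def bf_def)
    have "char_poly D = (\<Prod>x\<leftarrow>diag_mat D. [:- x, 1:])" by (rule char_poly_upper_triangular[OF D ut])
    also have "\<dots> = prod_list (map (\<lambda>i. [:- (if i + 3 \<le> n then - w else 0), 1:]) [0..<2*n-3])"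
      unfolding diag_mat_def D_def by (auto simp: bf_def intro!: arg_cong[where f = prod_list] map_cong)
    also have "\<dots> = (\<Prod>i\<in>{0..<2*n-3}. [:- (if i + 3 \<le> n then - w else 0), 1:])"
      by (simp add: prod.distinct_set_conv_list[symmetric])
    also have "{0..<2*n-3} = {0..<n-2} \<union> {n-2..<2*n-3}" using n by auto
    also have "(\<Prod>i\<in>{0..<n-2} \<union> {n-2..<2*n-3}. [:- (if i + 3 \<le> n then - w else 0), 1:]) =
       (\<Prod>i\<in>{0..<n-2}. [:- (if i + 3 \<le> n then - w else 0), 1:]) * (\<Prod>i\<in>{n-2..<2*n-3}. [:- (if i + 3 \<le> n then - w else 0), 1:])"
      by (rule prod.union_disjoint) auto
    also have "(\<Prod>i\<in>{0..<n-2}. [:- (if i + 3 \<le> n then - w else 0), 1:]) = (\<Prod>i\<in>{0..<n-2}. [:w, 1:])"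
      by (rule prod.cong) auto
    also have "(\<Prod>i\<in>{n-2..<2*n-3}. [:- (if i + 3 \<le> n then - w else 0), 1:]) = (\<Prod>i\<in>{n-2..<2*n-3}. [:0, 1:])"
      by (rule prod.cong) auto
    finally show ?thesis using n by simp
  qed
  moreover have "char_poly B3 = [:0,1:]^2 * ([:0,1:] - [:real (n-2) * w:]) - [:real (n-1) * a^2:] * [:0,1:] - [:real n * b^2:] * ([:0,1:] - [:real (n-2) * w:])"
    unfolding char_poly_def
    by (subst det3[OF char_poly_matrix_closed[OF B3]])
       (simp add: char_poly_matrix_def B3_def bf_def power2_eq_square algebra_simps)
  ultimately show ?thesis by (simp add: ac_simps)
qed


lemma dmult: "(i,s) \<otimes>\<^bsub>dihedral_group n\<^esub> (j,t) = ((if s then i + (n - j) else i + j) mod n, s \<noteq> t)"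
  by (simp add: dihedral_group_def)
lemma dcarrier: "carrier (dihedral_group n) = {0..<n} \<times> UNIV" by (simp add: dihedral_group_def)
lemma d_one: "\<one>\<^bsub>dihedral_group n\<^esub> = (0, False)" by (simp add: dihedral_group_def)

lemma modaux: "j < n \<Longrightarrow> int ((i + (n - j)) mod n) = (int i - int j) mod int n"
proof -
  assume "j < n"
  then have "int (i + (n - j)) = (int i - int j) + int n" by simp
  then show ?thesis by (metis mod_add_self2 of_nat_mod)
qed

lemma inv_rot: "i < (n::nat) \<Longrightarrow> ((n - i) mod n + i) mod n = 0"
  by (cases "i = 0") auto

lemma dgroup: assumes "n > 0" shows "group (dihedral_group n)"
proof (rule groupI)
  have "(0::nat,False) \<in> carrier (dihedral_group n)" using assms by (simp add: dcarrier)
  then show "\<one>\<^bsub>dihedral_group n\<^esub> \<in> carrier (dihedral_group n)" by (simp add: d_one)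
next
  fix x y assume "x \<in> carrier (dihedral_group n)" "y \<in> carrier (dihedral_group n)"
  then show "x \<otimes>\<^bsub>dihedral_group n\<^esub> y \<in> carrier (dihedral_group n)" using assms
    by (cases x, cases y) (simp add: dmult dcarrier)
next
  fix x assume "x \<in> carrier (dihedral_group n)"
  then show "\<one>\<^bsub>dihedral_group n\<^esub> \<otimes>\<^bsub>dihedral_group n\<^esub> x = x"
    by (cases x) (auto simp: dmult dcarrier d_one)
next
  fix x assume x: "x \<in> carrier (dihedral_group n)"
  obtain i s where xs: "x = (i,s)" by force
  have i: "i < n" using x xs by (simp add: dcarrier)
  show "\<exists>y\<in>carrier (dihedral_group n). y \<otimes>\<^bsub>dihedral_group n\<^esub> x = \<one>\<^bsub>dihedral_group n\<^esub>"
  proof (cases s)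
    case True
    then show ?thesis using i xs by (intro bexI[of _ "(i,True)"]) (auto simp: dmult dcarrier d_one)
  next
    case False
    show ?thesis using i xs False assms
      by (intro bexI[of _ "((n - i) mod n,False)"]) (auto simp: dmult dcarrier d_one inv_rot)
  qed
next
  fix x y z assume x: "x \<in> carrier (dihedral_group n)" and y: "y \<in> carrier (dihedral_group n)"
    and z: "z \<in> carrier (dihedral_group n)"
  obtain i s j t k u where xs: "x = (i,s)" "y = (j,t)" "z = (k,u)" by (metis prod.exhaust)
  have ijk: "i < n" "j < n" "k < n" using x y z xs by (auto simp: dcarrier)
  have fm: "int (fst ((a,p) \<otimes>\<^bsub>dihedral_group n\<^esub> (b,q))) = (if p then int a - int b else int a + int b) mod int n"
    if "b < n" for a b p q
  proof (cases p)
    case True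
    then show ?thesis using that by (simp only: dmult fst_conv \<open>p\<close> if_True) (rule modaux)
  next
    case False
    then show ?thesis by (simp add: dmult of_nat_mod)
  qed
  have lt: "fst ((a,p) \<otimes>\<^bsub>dihedral_group n\<^esub> (b,q)) < n" for a b p q using assms by (simp add: dmult)
  have "int (fst (((i,s) \<otimes>\<^bsub>dihedral_group n\<^esub> (j,t)) \<otimes>\<^bsub>dihedral_group n\<^esub> (k,u))) = int (fst ((i,s) \<otimes>\<^bsub>dihedral_group n\<^esub> ((j,t) \<otimes>\<^bsub>dihedral_group n\<^esub> (k,u))))"
  proof -
    obtain a p where ap: "(i,s) \<otimes>\<^bsub>dihedral_group n\<^esub> (j,t) = (a,p)" by force
    obtain b q where bq: "(j,t) \<otimes>\<^bsub>dihedral_group n\<^esub> (k,u) = (b,q)" by force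
    have p: "p = (s \<noteq> t)" and q: "q = (t \<noteq> u)" using ap bq by (auto simp: dmult)
    have a: "int a = (if s then int i - int j else int i + int j) mod int n" using fm[of j i s t] ap ijk by simp
    have b: "int b = (if t then int j - int k else int j + int k) mod int n" using fm[of k j t u] bq ijk by simp
    have bn: "b < n" using lt[of j t k u] bq by simp
    show ?thesis unfolding ap bq using fm[of k a p u] fm[of b i s q] ijk bn a b p q
      by (cases s; cases t; simp add: mod_add_left_eq mod_diff_left_eq mod_add_right_eq mod_diff_right_eq algebra_simps)
  qed
  then show "(x \<otimes>\<^bsub>dihedral_group n\<^esub> y) \<otimes>\<^bsub>dihedral_group n\<^esub> z = x \<otimes>\<^bsub>dihedral_group n\<^esub> (y \<otimes>\<^bsub>dihedral_group n\<^esub> z)"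
    unfolding xs by (simp add: dmult) (cases u; cases t; simp)
qed
lemma rot_sub: assumes "n > 0" shows "subgroup ({0..<n} \<times> {False}) (dihedral_group n)"
proof -
  interpret group "dihedral_group n" using dgroup[OF assms] .
  show ?thesis
  proof (rule subgroupI)
    fix a assume a: "a \<in> {0..<n} \<times> {False}"
    then obtain i where ai: "a = (i, False)" "i < n" by auto
    have "inv\<^bsub>dihedral_group n\<^esub> a = ((n - i) mod n, False)"
      using ai assms by (intro inv_equality) (auto simp: dmult dcarrier d_one inv_rot)
    then show "inv\<^bsub>dihedral_group n\<^esub> a \<in> {0..<n} \<times> {False}" using assms by simp
  qed (use assms in \<open>auto simp: dcarrier dmult\<close>)
qed

lemma refl_sub: assumes "n > 0" "i < n" shows "subgroup {(0,False), (i,True)} (dihedral_group n)"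
proof -
  interpret group "dihedral_group n" using dgroup[OF assms(1)] .
  show ?thesis
  proof (rule subgroupI)
    fix a assume a: "a \<in> {(0,False), (i,True)}"
    have "inv\<^bsub>dihedral_group n\<^esub> (i,True) = (i,True)"
      using assms by (intro inv_equality) (auto simp: dmult dcarrier d_one)
    moreover have "inv\<^bsub>dihedral_group n\<^esub> (0,False) = (0,False)"
      using inv_one by (simp add: d_one)
    ultimately show "inv\<^bsub>dihedral_group n\<^esub> a \<in> {(0,False), (i,True)}" using a by auto
  qed (use assms in \<open>auto simp: dcarrier dmult\<close>)
qed

lemma gen_rot: assumes "n > 0" "k < n" shows "(k,False) \<in> generate (dihedral_group n) {(1 mod n,False)}"
  using assms(2)
proof (induction k)
  case 0
  then show ?case using generate.one[of "dihedral_group n"] by (simp add: d_one)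
next
  case (Suc k)
  have "(k,False) \<otimes>\<^bsub>dihedral_group n\<^esub> (1 mod n,False) \<in> generate (dihedral_group n) {(1 mod n,False)}"
    using Suc by (intro generate.eng[OF _ generate.incl]) auto
  moreover have "(k,False) \<otimes>\<^bsub>dihedral_group n\<^esub> (1 mod n,False) = (Suc k, False)"
  proof -
    have "1 mod n = 1" using Suc by simp
    then show ?thesis using Suc by (simp add: dmult)
  qed
  ultimately show ?case by simp
qed

lemma adj_char: assumes "n > 0"
  shows "enhanced_power_adj (dihedral_group n) x y \<longleftrightarrow>
    x \<in> {0..<n} \<times> UNIV \<and> y \<in> {0..<n} \<times> UNIV \<and> x \<noteq> y \<and> (x = (0,False) \<or> y = (0,False) \<or> (snd x = False \<and> snd y = False))"
proof -
  interpret group "dihedral_group n" using dgroup[OF assms(1)] .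
  have sub: "generate (dihedral_group n) {z} \<subseteq> {0..<n} \<times> {False} \<or> (\<exists>i<n. generate (dihedral_group n) {z} \<subseteq> {(0,False), (i,True)})"
    if zin: "z \<in> {0..<n} \<times> UNIV" for z
  proof -
    obtain i s where z: "z = (i,s)" "i < n" using zin by (cases z) auto
    show ?thesis
    proof (cases s)
      case True
      have "generate (dihedral_group n) {z} \<subseteq> {(0,False), (i,True)}"
        by (rule generate_subgroup_incl[OF _ refl_sub[OF assms z(2)]]) (use z True in auto)
      then show ?thesis using z(2) by blast
    next
      case False
      have "generate (dihedral_group n) {z} \<subseteq> {0..<n} \<times> {False}"
        by (rule generate_subgroup_incl[OF _ rot_sub[OF assms]]) (use z False in auto)
      then show ?thesis by blast
    qed
  qed
  show ?thesis
  proof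
    assume a: "enhanced_power_adj (dihedral_group n) x y"
    then obtain z where z: "z \<in> {0..<n} \<times> UNIV" "x \<in> generate (dihedral_group n) {z}" "y \<in> generate (dihedral_group n) {z}"
      by (auto simp: enhanced_power_adj_def dcarrier)
    show "x \<in> {0..<n} \<times> UNIV \<and> y \<in> {0..<n} \<times> UNIV \<and> x \<noteq> y \<and> (x = (0,False) \<or> y = (0,False) \<or> (snd x = False \<and> snd y = False))"
      using a sub[OF z(1)] z(2,3) by (auto simp: enhanced_power_adj_def dcarrier)
  next
    assume a: "x \<in> {0..<n} \<times> UNIV \<and> y \<in> {0..<n} \<times> UNIV \<and> x \<noteq> y \<and> (x = (0,False) \<or> y = (0,False) \<or> (snd x = False \<and> snd y = False))"
    have e: "(0,False) \<in> generate (dihedral_group n) H" for H using generate.one[of "dihedral_group n"] by (simp add: d_one)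
    show "enhanced_power_adj (dihedral_group n) x y"
      unfolding enhanced_power_adj_def dcarrier
    proof (intro conjI)
      show "\<exists>z\<in>{0..<n} \<times> UNIV. x \<in> generate (dihedral_group n) {z} \<and> y \<in> generate (dihedral_group n) {z}"
      proof (cases "x = (0,False)")
        case True
        then show ?thesis using a e by (intro bexI[of _ y]) (auto intro: generate.incl)
      next
        case False
        show ?thesis
        proof (cases "y = (0,False)")
          case True
          then show ?thesis using a e by (intro bexI[of _ x]) (auto intro: generate.incl)
        next
          case False
          with \<open>x \<noteq> (0,False)\<close> a have "snd x = False" "snd y = False" by auto
          have xe: "x = (fst x, False)" and ye: "y = (fst y, False)"
            using \<open>snd x = False\<close> \<open>snd y = False\<close> by (simp_all add: prod_eq_iff)
          have "fst x < n" "fst y < n" using a by auto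
          then have "x \<in> generate (dihedral_group n) {(1 mod n,False)}" "y \<in> generate (dihedral_group n) {(1 mod n,False)}"
            using gen_rot[OF assms] xe ye by metis+
          then show ?thesis using assms by (intro bexI[of _ "(1 mod n, False)"]) auto
        qed
      qed
    qed (use a in auto)
  qed
qed
definition gidx :: "nat \<Rightarrow> nat \<Rightarrow> nat \<times> bool" where
  "gidx n i = (if i = 0 then (0,False) else if i = 1 then (1,False) else if i = 2 then (0,True)
     else if i \<le> n then (i-1,False) else (i-n,True))"


lemma gidx_inj: assumes "n \<ge> 3" shows "inj_on (gidx n) {0..<2*n}"
  using assms by (intro inj_onI) (auto simp: gidx_def split: if_splits)

lemma gidx_img: assumes "n \<ge> 3" shows "gidx n ` {0..<2*n} = {0..<n} \<times> UNIV"
proof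
  show "gidx n ` {0..<2*n} \<subseteq> {0..<n} \<times> UNIV" using assms by (auto simp: gidx_def)
next
  show "{0..<n} \<times> UNIV \<subseteq> gidx n ` {0..<2*n}"
  proof
    fix x assume "x \<in> ({0..<n} \<times> UNIV :: (nat \<times> bool) set)"
    then obtain i s where x: "x = (i,s)" "i < n" by auto
    show "x \<in> gidx n ` {0..<2*n}"
    proof (cases s)
      case True
      show ?thesis
      proof (cases "i = 0")
        case True
        then show ?thesis using x \<open>s\<close> assms by (intro image_eqI[of _ _ 2]) (auto simp: gidx_def)
      next
        case False
        then show ?thesis using x \<open>s\<close> assms by (intro image_eqI[of _ _ "i+n"]) (auto simp: gidx_def)
      qed
    next
      case False
      show ?thesis
      proof (cases "i \<le> 1")
        case True
        then show ?thesis using x \<open>\<not>s\<close> assms by (intro image_eqI[of _ _ i]) (auto simp: gidx_def)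
      next
        case False
        then show ?thesis using x \<open>\<not>s\<close> assms by (intro image_eqI[of _ _ "i+1"]) (auto simp: gidx_def)
      qed
    qed
  qed
qed

lemma gidx_e: "i < 2*n \<Longrightarrow> n \<ge> 3 \<Longrightarrow> gidx n i = (0,False) \<longleftrightarrow> i = 0"
  by (auto simp: gidx_def)
lemma gidx_snd: "i < 2*n \<Longrightarrow> n \<ge> 3 \<Longrightarrow> snd (gidx n i) = False \<longleftrightarrow> i = 0 \<or> isR n i"
  by (auto simp: gidx_def isR_def)

lemma deg_e: assumes "n \<ge> 3"
  shows "graph_deg ({0..<n} \<times> UNIV) (enhanced_power_adj (dihedral_group n)) (0,False) = 2*n - 1"
proof -
  have "{v \<in> {0..<n} \<times> UNIV. enhanced_power_adj (dihedral_group n) (0,False) v} = ({0..<n} \<times> UNIV) - {(0,False)}"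
    using assms by (auto simp: adj_char)
  moreover have "card ({0..<n} \<times> (UNIV::bool set)) = 2*n" by (simp add: card_cartesian_product)
  ultimately show ?thesis using assms unfolding graph_deg_def by (simp add: card_Diff_singleton)
qed

lemma deg_r: assumes "n \<ge> 3" "0 < k" "k < n"
  shows "graph_deg ({0..<n} \<times> UNIV) (enhanced_power_adj (dihedral_group n)) (k,False) = n - 1"
proof -
  have "{v \<in> {0..<n} \<times> UNIV. enhanced_power_adj (dihedral_group n) (k,False) v} = ({0..<n} - {k}) \<times> {False}"
    using assms by (auto simp: adj_char)
  then show ?thesis using assms unfolding graph_deg_def by (simp add: card_cartesian_product)
qed

lemma deg_f: assumes "n \<ge> 3" "k < n"
  shows "graph_deg ({0..<n} \<times> UNIV) (enhanced_power_adj (dihedral_group n)) (k,True) = 1"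
proof -
  have "{v \<in> {0..<n} \<times> UNIV. enhanced_power_adj (dihedral_group n) (k,True) v} = {(0,False)}"
    using assms by (auto simp: adj_char)
  then show ?thesis unfolding graph_deg_def by simp
qed

lemma deg_idx: assumes "n \<ge> 3" "i < 2*n"
  shows "graph_deg ({0..<n} \<times> UNIV) (enhanced_power_adj (dihedral_group n)) (gidx n i) =
    (if i = 0 then 2*n-1 else if isR n i then n-1 else 1)"
  using assms deg_e[OF assms(1)] deg_r[OF assms(1)] deg_f[OF assms(1)]
  by (auto simp: gidx_def isR_def)

lemma C_canon: assumes "n \<ge> 3"
  shows "sombor_matrix (map (gidx n) [0..<2*n]) (enhanced_power_adj (dihedral_group n)) = mat (2*n) (2*n) (\<lambda>(i,j). cf n (sqrt (real (2*n-1)^2 + real (n-1)^2)) (sqrt (real (2*n-1)^2 + 1)) (sqrt (real (n-1)^2 + real (n-1)^2)) i j)"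
proof -
  have set: "set (map (gidx n) [0..<2*n]) = {0..<n} \<times> UNIV" using gidx_img[OF assms] by simp
  show ?thesis
  proof (rule eq_matI)
    fix i j assume ij: "i < dim_row (mat (2*n) (2*n) (\<lambda>(i,j). cf n (sqrt (real (2*n-1)^2 + real (n-1)^2)) (sqrt (real (2*n-1)^2 + 1)) (sqrt (real (n-1)^2 + real (n-1)^2)) i j))" "j < dim_col (mat (2*n) (2*n) (\<lambda>(i,j). cf n (sqrt (real (2*n-1)^2 + real (n-1)^2)) (sqrt (real (2*n-1)^2 + 1)) (sqrt (real (n-1)^2 + real (n-1)^2)) i j))"
    then have i: "i < 2*n" and j: "j < 2*n" by auto
    have neq: "gidx n i = gidx n j \<longleftrightarrow> i = j" using gidx_inj[OF assms] i j by (auto dest: inj_onD)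
    have carr: "gidx n k \<in> {0..<n} \<times> UNIV" if "k < 2*n" for k using that by (subst gidx_img[OF assms, symmetric]) auto
    have adj: "enhanced_power_adj (dihedral_group n) (gidx n i) (gidx n j) \<longleftrightarrow> i \<noteq> j \<and> (i = 0 \<or> j = 0 \<or> (isR n i \<and> isR n j))"
    proof -
      have "enhanced_power_adj (dihedral_group n) (gidx n i) (gidx n j) \<longleftrightarrow> gidx n i \<noteq> gidx n j \<and>
        (gidx n i = (0,False) \<or> gidx n j = (0,False) \<or> (snd (gidx n i) = False \<and> snd (gidx n j) = False))"
        using adj_char[of n "gidx n i" "gidx n j"] assms carr[OF i] carr[OF j] by simp
      also have "\<dots> \<longleftrightarrow> i \<noteq> j \<and> (i = 0 \<or> j = 0 \<or> ((i = 0 \<or> isR n i) \<and> (j = 0 \<or> isR n j)))"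
        by (simp only: neq gidx_e[OF i assms] gidx_e[OF j assms] gidx_snd[OF i assms] gidx_snd[OF j assms])
      finally show ?thesis by blast
    qed
    have r0: "\<not> isR n 0" by (simp add: isR_def)
    show "sombor_matrix (map (gidx n) [0..<2*n]) (enhanced_power_adj (dihedral_group n)) $$ (i, j) = mat (2*n) (2*n) (\<lambda>(i,j). cf n (sqrt (real (2*n-1)^2 + real (n-1)^2)) (sqrt (real (2*n-1)^2 + 1)) (sqrt (real (n-1)^2 + real (n-1)^2)) i j) $$ (i, j)"
      using i j assms r0 unfolding sombor_matrix_def set
      by (simp add: adj deg_idx cf_def add.commute)
  qed (auto simp: sombor_matrix_def)
qed

theorem corollary5p1:
  fixes n :: nat and vs :: "(nat \<times> bool) list"
  assumes "n \<ge> 3"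
    and "distinct vs" and "set vs = carrier (dihedral_group n)"
  shows "char_poly (sombor_matrix vs (enhanced_power_adj (dihedral_group n))) =
    [: real (n - 1) * sqrt 2, 1 :] ^ (n - 2) * [:0, 1:] ^ (n - 1) *
    (let X = [:0, 1:] :: real poly; c = real (n - 1) * real (n - 2) * sqrt 2 in
       X ^ 2 * (X - [:c:])
       - [:real (n - 1) * (5 * real n ^ 2 - 6 * real n + 2):] * X
       - [:2 * real n * (2 * real n ^ 2 - 2 * real n + 1):] * (X - [:c:]))"
proof -
  have n: "n \<ge> 3" by fact
  define G where "G = dihedral_group n"
  define E where "E = enhanced_power_adj G"
  define S where "S = carrier G"
  define f where "f = (\<lambda>x y. if E x y then sqrt (real (graph_deg S E x)^2 + real (graph_deg S E y)^2) else 0)"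
  define cs where "cs = map (gidx n) [0..<2*n]"
  have cs1: "distinct cs" unfolding cs_def using gidx_inj[OF n] by (simp add: distinct_map)
  have cs2: "set cs = S" unfolding cs_def S_def G_def using gidx_img[OF n] by (simp add: dcarrier)
  have lcs: "length cs = 2*n" by (simp add: cs_def)
  have sm: "sombor_matrix xs E = mat (length xs) (length xs) (\<lambda>(i,j). f (xs!i) (xs!j))" if "set xs = S" for xs
    unfolding sombor_matrix_def f_def that ..
  have "char_poly (sombor_matrix vs E) = char_poly (sombor_matrix cs E)"
    unfolding sm[OF assms(3)[folded G_def S_def]] sm[OF cs2]
    by (rule char_poly_reorder[OF assms(2) cs1]) (simp add: cs2 assms(3) S_def G_def)
  also have "sombor_matrix cs E = mat (2*n) (2*n) (\<lambda>(i,j). cf n (sqrt (real (2*n-1)^2 + real (n-1)^2)) (sqrt (real (2*n-1)^2 + 1)) (sqrt (real (n-1)^2 + real (n-1)^2)) i j)"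
    unfolding cs_def E_def G_def by (rule C_canon[OF n])
  finally have 1: "char_poly (sombor_matrix vs E) = char_poly (mat (2*n) (2*n) (\<lambda>(i,j). cf n (sqrt (real (2*n-1)^2 + real (n-1)^2)) (sqrt (real (2*n-1)^2 + 1)) (sqrt (real (n-1)^2 + real (n-1)^2)) i j))" .
  define a where "a = sqrt (real (2*n-1)^2 + real (n-1)^2)"
  define b where "b = sqrt (real (2*n-1)^2 + 1)"
  define w where "w = sqrt (real (n-1)^2 + real (n-1)^2)"
  define Cm where "Cm = mat (2*n) (2*n) (\<lambda>(i,j). cf n a b w i j)"
  define Bm where "Bm = mat (2*n) (2*n) (\<lambda>(i,j). bf n a b w i j)"
  define Pm where "Pm = mat (2*n) (2*n) (\<lambda>(i,j). pf n i j)"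
  define Qm where "Qm = mat (2*n) (2*n) (\<lambda>(i,j). qf n i j)"
  have car: "Cm \<in> carrier_mat (2*n) (2*n)" "Bm \<in> carrier_mat (2*n) (2*n)" "Pm \<in> carrier_mat (2*n) (2*n)" "Qm \<in> carrier_mat (2*n) (2*n)"
    by (auto simp: Cm_def Bm_def Pm_def Qm_def)
  have qp: "Qm * Pm = 1\<^sub>m (2*n)" unfolding Qm_def Pm_def by (rule QP[OF n])
  have pq: "Pm * Qm = 1\<^sub>m (2*n)" by (rule mat_mult_left_right_inverse[OF car(4) car(3) qp])
  have cp: "Cm * Pm = Pm * Bm" unfolding Cm_def Pm_def Bm_def by (rule CP[OF n])
  have "Cm = Cm * (Pm * Qm)" using car pq by simp
  also have "\<dots> = (Cm * Pm) * Qm" using car by (simp add: assoc_mult_mat)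
  also have "\<dots> = Pm * Bm * Qm" by (simp add: cp)
  finally have cpbq: "Cm = Pm * Bm * Qm" .
  have "similar_mat Cm Bm"
    unfolding similar_mat_def similar_mat_wit_def Let_def
    using car pq qp cpbq by (intro exI[of _ Pm] exI[of _ Qm]) (auto simp: Cm_def)
  then have 2: "char_poly Cm = char_poly Bm" by (rule char_poly_similar)
  have 3: "char_poly Bm = [:w, 1:] ^ (n-2) * [:0, 1:] ^ (n-1) *
    ([:0,1:]^2 * ([:0,1:] - [:real (n-2) * w:]) - [:real (n-1) * a^2:] * [:0,1:] - [:real n * b^2:] * ([:0,1:] - [:real (n-2) * w:]))"
    unfolding Bm_def by (rule charB[OF n])
  have rn: "real (n-1) = real n - 1" "real (n-2) = real n - 2" "real (2*n-1) = 2 * real n - 1" using n by auto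
  have ww: "w = real (n-1) * sqrt 2"
  proof -
    have "real (n-1)^2 + real (n-1)^2 = (real (n-1) * sqrt 2)^2" by (simp add: power_mult_distrib)
    then show ?thesis unfolding w_def by simp
  qed
  have a2: "a^2 = real (2*n-1)^2 + real (n-1)^2" unfolding a_def by (rule real_sqrt_pow2) simp
  have aa: "a^2 = 5 * real n ^ 2 - 6 * real n + 2" unfolding a2 rn
    by (simp add: power2_eq_square algebra_simps)
  have b2: "b^2 = real (2*n-1)^2 + 1" unfolding b_def by (rule real_sqrt_pow2) simp
  have bb: "real n * b^2 = 2 * real n * (2 * real n ^ 2 - 2 * real n + 1)" unfolding b2 rn
    by (simp add: power2_eq_square algebra_simps)
  have cc: "real (n-2) * w = real (n - 1) * real (n - 2) * sqrt 2" unfolding ww by simp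
  have c2: "char_poly (mat (2*n) (2*n) (\<lambda>(i,j). cf n (sqrt (real (2*n-1)^2 + real (n-1)^2)) (sqrt (real (2*n-1)^2 + 1)) (sqrt (real (n-1)^2 + real (n-1)^2)) i j)) = char_poly Bm"
    using 2 unfolding Cm_def a_def b_def w_def .
  have main: "char_poly (sombor_matrix vs (enhanced_power_adj (dihedral_group n))) = char_poly Bm"
    using 1 c2 unfolding E_def G_def by (rule trans)
  show ?thesis
    unfolding Let_def cc[symmetric] aa[symmetric] bb[symmetric] ww[symmetric] main 3 by (rule refl)
qed

end
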